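(* A finite simple graph $G=(V,E)$ with at least one edge is uniformly dense if and only if $c(E\setminus A)-c(E)\le |A|/\rho(G)$ for all proper subsets $A\subsetneq E$.
   Context: For $A\subseteq E$, $c(A)$ is the number of connected components of the graph $(V,A)$, $\operatorname{rank}(A)=|V|-c(A)$, $\rho(A)=|A|/\operatorname{rank}(A)$ for nonempty $A$, and $\rho(G)=\rho(E)$. $G$ is uniformly dense if $\rho(A)\le\rho(G)$ for all nonempty $A\subseteq E$. *)

theory Defs
  imports Complex_Main
begin

definition simple_graph :: "'a set \<Rightarrow> 'a set set \<Rightarrow> bool" where
  "simple_graph V E \<longleftrightarrow> finite V \<and>
     (\<forall>e\<in>E. \<exists>u v. u \<in> V \<and> v \<in> V \<and> u \<noteq> v \<and> e = {u, v})"

definition conn_rel :: "'a set \<Rightarrow> 'a set set \<Rightarrow> ('a \<times> 'a) set" where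
  "conn_rel V A = {(u, v). u \<in> V \<and> v \<in> V \<and> (u, v) \<in> ({(x, y). {x, y} \<in> A})\<^sup>*}"

definition ncomp :: "'a set \<Rightarrow> 'a set set \<Rightarrow> nat" where
  "ncomp V A = card (V // conn_rel V A)"

definition grank :: "'a set \<Rightarrow> 'a set set \<Rightarrow> nat" where
  "grank V A = card V - ncomp V A"

definition density :: "'a set \<Rightarrow> 'a set set \<Rightarrow> real" where
  "density V A = real (card A) / real (grank V A)"

definition uniformly_dense :: "'a set \<Rightarrow> 'a set set \<Rightarrow> bool" where
  "uniformly_dense V E \<longleftrightarrow> (\<forall>A. A \<subseteq> E \<and> A \<noteq> {} \<longrightarrow> density V A \<le> density V E)"

end

theory Submission
  imports Defs
begin

lemma conn_equiv: "equiv V (conn_rel V B)"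
proof (rule equivI)
  show "conn_rel V B \<subseteq> V \<times> V" unfolding conn_rel_def by auto
  show "refl_on V (conn_rel V B)" unfolding refl_on_def conn_rel_def by auto
  have symR: "sym {(x, y). {x, y} \<in> B}" unfolding sym_def by (auto simp: insert_commute)
  show "sym (conn_rel V B)" unfolding sym_def conn_rel_def
    using sym_rtrancl[OF symR] unfolding sym_def by blast
  show "trans (conn_rel V B)" unfolding trans_def conn_rel_def by auto
qed

lemma quot_img: "V // conn_rel V B = (\<lambda>x. conn_rel V B `` {x}) ` V"
  unfolding quotient_def by auto

lemma ncomp_le: "finite V \<Longrightarrow> ncomp V B \<le> card V"
  unfolding ncomp_def quot_img by (rule card_image_le)

lemma ncomp_less:
  assumes "finite V" "u \<in> V" "v \<in> V" "u \<noteq> v" "{u, v} \<in> B"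
  shows "ncomp V B < card V"
proof -
  have uv: "(u, v) \<in> conn_rel V B" using assms unfolding conn_rel_def by auto
  have eq: "conn_rel V B `` {u} = conn_rel V B `` {v}"
    using equiv_class_eq[OF conn_equiv uv] .
  have "\<not> inj_on (\<lambda>x. conn_rel V B `` {x}) V"
    using eq assms unfolding inj_on_def by blast
  then have "card ((\<lambda>x. conn_rel V B `` {x}) ` V) \<noteq> card V"
    using eq_card_imp_inj_on[OF assms(1)] by blast
  moreover have "card ((\<lambda>x. conn_rel V B `` {x}) ` V) \<le> card V" by (rule card_image_le[OF assms(1)])
  ultimately show ?thesis unfolding ncomp_def quot_img by simp
qed

lemma rank_pos:
  assumes "simple_graph V E" "B \<subseteq> E" "B \<noteq> {}"
  shows "ncomp V B < card V"
proof -
  obtain e where "e \<in> B" using assms by auto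
  then obtain u v where "u \<in> V" "v \<in> V" "u \<noteq> v" "e = {u, v}"
    using assms unfolding simple_graph_def by blast
  then show ?thesis using ncomp_less[of V u v B] assms \<open>e \<in> B\<close>
    unfolding simple_graph_def by blast
qed

lemma key:
  assumes "simple_graph V E" "B \<subseteq> E" "B \<noteq> {}"
  shows "(real (ncomp V B) - real (ncomp V E) \<le> real (card E - card B) / density V E)
     \<longleftrightarrow> density V B \<le> density V E"
proof -
  have fV: "finite V" using assms unfolding simple_graph_def by auto
  have "E \<subseteq> Pow V" using assms(1) unfolding simple_graph_def by auto
  then have fE: "finite E" using fV finite_subset by (metis finite_Pow_iff)
  have cB: "ncomp V B < card V" by (rule rank_pos[OF assms])
  have cE: "ncomp V E < card V" by (rule rank_pos[OF assms(1) order_refl]) (use assms in auto)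
  have kb: "card B \<le> card E" using card_mono[OF fE assms(2)] .
  have mpos: "card E > 0" using fE assms card_gt_0_iff by blast
  have bpos: "card B > 0" using assms fE finite_subset card_gt_0_iff by blast
  define n where "n = real (card V)"
  define a where "a = real (ncomp V B)"
  define c where "c = real (ncomp V E)"
  define m where "m = real (card E)"
  define b where "b = real (card B)"
  have dB: "density V B = b / (n - a)" unfolding density_def grank_def n_def a_def b_def
    using cB by (simp add: of_nat_diff)
  have dE: "density V E = m / (n - c)" unfolding density_def grank_def n_def c_def m_def
    using cE by (simp add: of_nat_diff)
  have k: "real (card E - card B) = m - b" unfolding m_def b_def using kb by (simp add: of_nat_diff)
  have p1: "n - a > 0" "n - c > 0" "m > 0" "b > 0" using cB cE mpos bpos
    unfolding n_def a_def c_def m_def b_def by auto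
  have "(a - c \<le> (m - b) / (m / (n - c))) \<longleftrightarrow> (a - c) * m \<le> (m - b) * (n - c)"
    using p1 by (simp add: field_simps)
  also have "\<dots> \<longleftrightarrow> b * (n - c) \<le> m * (n - a)" by (simp add: algebra_simps)
  also have "\<dots> \<longleftrightarrow> b / (n - a) \<le> m / (n - c)" using p1 by (simp add: field_simps)
  finally show ?thesis unfolding dB dE k a_def[symmetric] c_def[symmetric] by simp
qed

theorem proposition3p12:
  fixes V :: "'a set" and E :: "'a set set"
  assumes "simple_graph V E" and "E \<noteq> {}"
  shows "uniformly_dense V E \<longleftrightarrow>
    (\<forall>A. A \<subset> E \<longrightarrow>
       real (ncomp V (E - A)) - real (ncomp V E) \<le> real (card A) / density V E)"
proof -
  have fV: "finite V" using assms unfolding simple_graph_def by auto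
  have "E \<subseteq> Pow V" using assms(1) unfolding simple_graph_def by auto
  then have fE: "finite E" using fV finite_subset by (metis finite_Pow_iff)
  have cardA: "card A = card E - card (E - A)" if "A \<subseteq> E" for A
  proof -
    have "finite A" using that fE finite_subset by blast
    then have "card (E - A) = card E - card A" using card_Diff_subset that by blast
    moreover have "card A \<le> card E" using card_mono[OF fE that] .
    ultimately show ?thesis by simp
  qed
  show ?thesis
  proof
    assume ud: "uniformly_dense V E"
    show "\<forall>A. A \<subset> E \<longrightarrow> real (ncomp V (E - A)) - real (ncomp V E) \<le> real (card A) / density V E"
    proof (intro allI impI)
      fix A assume A: "A \<subset> E"
      have ne: "E - A \<noteq> {}" using A by auto
      have "density V (E - A) \<le> density V E" using ud ne unfolding uniformly_dense_def by auto
      then show "real (ncomp V (E - A)) - real (ncomp V E) \<le> real (card A) / density V E"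
      proof -
        have "A \<subseteq> E" using A by auto
        then have "card A = card E - card (E - A)" by (rule cardA)
        moreover have "E - A \<subseteq> E" by auto
        ultimately show ?thesis using key[OF assms(1) \<open>E - A \<subseteq> E\<close> ne] \<open>density V (E - A) \<le> density V E\<close> by simp
      qed
    qed
  next
    assume H: "\<forall>A. A \<subset> E \<longrightarrow> real (ncomp V (E - A)) - real (ncomp V E) \<le> real (card A) / density V E"
    show "uniformly_dense V E" unfolding uniformly_dense_def
    proof (intro allI impI)
      fix B assume B: "B \<subseteq> E \<and> B \<noteq> {}"
      have ps: "E - B \<subset> E" using B by auto
      have eq: "E - (E - B) = B" using B by auto
      have "real (ncomp V B) - real (ncomp V E) \<le> real (card (E - B)) / density V E"
        using H[rule_format, OF ps] unfolding eq .
      moreover have "card (E - B) = card E - card B" using B fE by (meson card_Diff_subset finite_subset)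
      ultimately show "density V B \<le> density V E" using key[OF assms(1), of B] B by simp
    qed
  qed
qed

end
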